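(* Suppose $1/n\ll\varepsilon_3\ll\varepsilon_4\ll1$. Let $G$ be a digraph on $n$ vertices with $\delta^0(G)\geq n/2$ and let $A,B,S,T$ be a partition of $V(G)$ satisfying the $AB$-conditions. Let $C$ be an oriented cycle on $n$ vertices with $\sigma(C)<\varepsilon_4 n$. Then there is an exceptional cover of $G$ (with respect to $C$ and $A,B,S,T$) of length at most $21\varepsilon_4 n$.
   Context: Digraphs have no loops and at most one edge in each direction between two vertices; $\delta^0$ is the minimum semidegree; $d^+_X(x)=|N^+(x)\cap X|$, $d^-_X(x)=|N^-(x)\cap X|$, $d^\pm_X(x)\geq c$ means both $\geq c$ and $d^\pm_X(x)<c$ means both $<c$. $G[A,B]$ is the digraph on $A\cup B$ with edges of $G$ between $A$ and $B$ in either direction. The $AB$-conditions on a partition $A,B,S,T$ of sizes $a,b,s,t$: $a\leq b$, $s\leq t$; $\lfloor n/2\rfloor-\varepsilon_3 n\leq a,b\leq\lceil n/2\rceil+\varepsilon_3n$; $\delta^0(G[A,B])\geq n/50$; $d^\pm_B(x)\geq n/2-\varepsilon_3n$ for all but at most $\varepsilon_3n$ vertices $x\in A$; $d^\pm_A(x)\geq n/2-\varepsilon_3n$ for all but at most $\varepsilon_3n$ vertices $x\in B$; $s+t\leq\varepsilon_3n$; $d^-_A(x),d^+_B(x)\geq n/50$ for all $x\in S$; $d^-_B(x),d^+_A(x)\geq n/50$ for all $x\in T$; if $a<b$ then $d^\pm_B(x)<n/20$ for all $x\in B$, $d^-_B(x)<n/20$ for all $x\in S$ and $d^+_B(x)<n/20$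 for all $x\in T$. For an oriented cycle $C$, $\sigma(C)$ is the number of vertices of outdegree $0$ in $C$. An exceptional cover of $G$ is a path $P\subseteq G$ which is a copy (image under an injective edge- and orientation-preserving map) of some subpath of $C$ such that: $P$ covers $S\cup T$ (i.e. $S\cup T\subseteq V(P)$); both endvertices of $P$ lie in $A$; and $|A\setminus V(P)|+1=|B\setminus V(P)|$. Length is the number of edges. The hierarchy $\alpha\ll\beta$ means $\alpha$ is sufficiently small as a function of $\beta$. *)

theory Defs
  imports Complex_Main
begin

text \<open>No loops; as a relation
  there is at most one edge in each direction.\<close>
definition digraph :: "nat set \<Rightarrow> (nat \<Rightarrow> nat \<Rightarrow> bool) \<Rightarrow> bool" where
  "digraph V E \<longleftrightarrow> finite V \<and> (\<forall>x y. E x y \<longrightarrow> x \<in> V \<and> y \<in> V) \<and> (\<forall>x. \<not> E x x)"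

definition dout :: "(nat \<Rightarrow> nat \<Rightarrow> bool) \<Rightarrow> nat set \<Rightarrow> nat \<Rightarrow> nat" where
  "dout E X x = card {y \<in> X. E x y}"

definition din :: "(nat \<Rightarrow> nat \<Rightarrow> bool) \<Rightarrow> nat set \<Rightarrow> nat \<Rightarrow> nat" where
  "din E X x = card {y \<in> X. E y x}"

definition min_semideg_ge :: "nat set \<Rightarrow> (nat \<Rightarrow> nat \<Rightarrow> bool) \<Rightarrow> real \<Rightarrow> bool" where
  "min_semideg_ge V E c \<longleftrightarrow> (\<forall>x\<in>V. real (dout E V x) \<ge> c \<and> real (din E V x) \<ge> c)"

text \<open>\<delta>^0(G[A,B]) \<ge> c, where G[A,B] has vertex set A \<union> B and the edges of G
  between A and B (A, B disjoint).\<close>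
definition bip_semideg_ge :: "(nat \<Rightarrow> nat \<Rightarrow> bool) \<Rightarrow> nat set \<Rightarrow> nat set \<Rightarrow> real \<Rightarrow> bool" where
  "bip_semideg_ge E A B c \<longleftrightarrow>
     (\<forall>x\<in>A. real (dout E B x) \<ge> c \<and> real (din E B x) \<ge> c) \<and>
     (\<forall>x\<in>B. real (dout E A x) \<ge> c \<and> real (din E A x) \<ge> c)"

definition AB_conditions ::
  "real \<Rightarrow> nat \<Rightarrow> nat set \<Rightarrow> (nat \<Rightarrow> nat \<Rightarrow> bool) \<Rightarrow> nat set \<Rightarrow> nat set \<Rightarrow> nat set \<Rightarrow> nat set \<Rightarrow> bool" where
  "AB_conditions eps3 n V E A B S T \<longleftrightarrow>
     A \<union> B \<union> S \<union> T = V \<and> A \<inter> B = {} \<and> A \<inter> S = {} \<and> A \<inter> T = {} \<and>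
     B \<inter> S = {} \<and> B \<inter> T = {} \<and> S \<inter> T = {} \<and>
     card A \<le> card B \<and> card S \<le> card T \<and>
     real_of_int \<lfloor>real n / 2\<rfloor> - eps3 * n \<le> real (card A) \<and>
     real (card A) \<le> real_of_int \<lceil>real n / 2\<rceil> + eps3 * n \<and>
     real_of_int \<lfloor>real n / 2\<rfloor> - eps3 * n \<le> real (card B) \<and>
     real (card B) \<le> real_of_int \<lceil>real n / 2\<rceil> + eps3 * n \<and>
     bip_semideg_ge E A B (real n / 50) \<and>
     real (card {x \<in> A. \<not> (real (dout E B x) \<ge> real n / 2 - eps3 * n \<and>
                             real (din E B x) \<ge> real n / 2 - eps3 * n)}) \<le> eps3 * n \<and>
     real (card {x \<in> B. \<not> (real (dout E A x) \<ge> real n / 2 - eps3 * n \<and>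
                             real (din E A x) \<ge> real n / 2 - eps3 * n)}) \<le> eps3 * n \<and>
     real (card S + card T) \<le> eps3 * n \<and>
     (\<forall>x\<in>S. real (din E A x) \<ge> real n / 50 \<and> real (dout E B x) \<ge> real n / 50) \<and>
     (\<forall>x\<in>T. real (din E B x) \<ge> real n / 50 \<and> real (dout E A x) \<ge> real n / 50) \<and>
     (card A < card B \<longrightarrow>
        (\<forall>x\<in>B. real (dout E B x) < real n / 20 \<and> real (din E B x) < real n / 20) \<and>
        (\<forall>x\<in>S. real (din E B x) < real n / 20) \<and>
        (\<forall>x\<in>T. real (dout E B x) < real n / 20))"

text \<open>An oriented cycle C on n vertices 0,...,n-1: for i < n the edge between
  i and (i+1) mod n is oriented i \<rightarrow> (i+1) mod n iff ori i, otherwise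
  (i+1) mod n \<rightarrow> i.\<close>

text \<open>\<sigma>(C): number of vertices of C of outdegree 0, i.e. both incident edges
  point into the vertex.\<close>
definition sigma_cyc :: "nat \<Rightarrow> (nat \<Rightarrow> bool) \<Rightarrow> nat" where
  "sigma_cyc n ori = card {i. i < n \<and> \<not> ori i \<and> ori ((i + n - 1) mod n)}"

definition copy_of_subpath ::
  "nat \<Rightarrow> (nat \<Rightarrow> bool) \<Rightarrow> nat set \<Rightarrow> (nat \<Rightarrow> nat \<Rightarrow> bool) \<Rightarrow> nat \<Rightarrow> nat list \<Rightarrow> bool" where
  "copy_of_subpath n ori V E j P \<longleftrightarrow>
     j < n \<and> P \<noteq> [] \<and> length P \<le> n \<and> distinct P \<and> set P \<subseteq> V \<and>
     (\<forall>m. Suc m < length P \<longrightarrow>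
        (if ori ((j + m) mod n) then E (P ! m) (P ! Suc m) else E (P ! Suc m) (P ! m)))"

definition exceptional_cover ::
  "nat \<Rightarrow> (nat \<Rightarrow> bool) \<Rightarrow> nat set \<Rightarrow> (nat \<Rightarrow> nat \<Rightarrow> bool) \<Rightarrow> nat set \<Rightarrow> nat set \<Rightarrow> nat set \<Rightarrow> nat set \<Rightarrow> nat list \<Rightarrow> bool" where
  "exceptional_cover n ori V E A B S T P \<longleftrightarrow>
     (\<exists>j. copy_of_subpath n ori V E j P) \<and>
     S \<union> T \<subseteq> set P \<and> hd P \<in> A \<and> last P \<in> A \<and>
     card (A - set P) + 1 = card (B - set P)"

end

theory Submission
  imports Defs
begin


fun chain :: "(nat \<Rightarrow> nat \<Rightarrow> bool) \<Rightarrow> (nat \<Rightarrow> bool) \<Rightarrow> nat \<Rightarrow> nat list \<Rightarrow> bool" where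
  "chain E ori p (x # y # zs) = ((if ori p then E x y else E y x) \<and> chain E ori (Suc p) (y # zs))"
| "chain E ori p _ = True"

lemma chain_snoc:
  "xs \<noteq> [] \<Longrightarrow> chain E ori p (xs @ [y]) \<longleftrightarrow> chain E ori p xs \<and>
     (if ori (p + length xs - 1) then E (last xs) y else E y (last xs))"
proof (induction xs arbitrary: p)
  case Nil then show ?case by simp
next
  case (Cons x xs)
  then show ?case by (cases xs) auto
qed

lemma chain_nth:
  "chain E ori p xs \<Longrightarrow> Suc m < length xs \<Longrightarrow>
     (if ori (p + m) then E (xs!m) (xs!Suc m) else E (xs!Suc m) (xs!m))"
proof (induction xs arbitrary: p m)
  case Nil then show ?case by simp
next
  case (Cons x xs)
  then show ?case
  proof (cases xs)
    case Nil then show ?thesis using Cons by simp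
  next
    case (Cons y zs)
    show ?thesis
    proof (cases m)
      case 0 then show ?thesis using Cons.prems \<open>xs = y # zs\<close> by simp
    next
      case (Suc m')
      have "chain E ori (Suc p) xs" using Cons.prems \<open>xs = y # zs\<close> by simp
      from Cons.IH[OF this, of m'] Cons.prems Suc show ?thesis by simp
    qed
  qed
qed



locale su =
  fixes n :: nat and V :: "nat set" and E :: "nat \<Rightarrow> nat \<Rightarrow> bool" and A B S T :: "nat set"
    and ori :: "nat \<Rightarrow> bool" and e3 e4 :: real
  assumes dg: "digraph V E" and cV: "card V = n" and msd: "min_semideg_ge V E (real n / 2)"
    and ab: "AB_conditions e3 n V E A B S T" and sig: "real (sigma_cyc n ori) < e4 * n"
    and e4pos: "0 < e4" and e4le: "e4 \<le> 1/2000" and e3pos: "0 < e3" and e3le: "e3 \<le> e4/100"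
    and nbig: "100 \<le> e4 * n"
begin

definition "Ag = {x\<in>A. real (dout E B x) \<ge> real n / 2 - e3 * n \<and> real (din E B x) \<ge> real n / 2 - e3 * n}"
definition "Bg = {x\<in>B. real (dout E A x) \<ge> real n / 2 - e3 * n \<and> real (din E A x) \<ge> real n / 2 - e3 * n}"
definition "cls b = (if b then A else B)"
definition "gd b = (if b then Ag else Bg)"
definition "stp p x y = (if ori p then E x y else E y x)"

lemma finV: "finite V" using dg by (simp add: digraph_def)
lemma Evert: "E x y \<Longrightarrow> x \<in> V \<and> y \<in> V" using dg by (simp add: digraph_def)
lemma Eirr: "\<not> E x x" using dg by (simp add: digraph_def)

lemma part: "A \<union> B \<union> S \<union> T = V" "A \<inter> B = {}" "A \<inter> S = {}" "A \<inter> T = {}"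
  "B \<inter> S = {}" "B \<inter> T = {}" "S \<inter> T = {}" using ab by (auto simp: AB_conditions_def)

lemma subV: "A \<subseteq> V" "B \<subseteq> V" "S \<subseteq> T \<union> S" "S \<subseteq> V" "T \<subseteq> V" using part(1) by auto
lemma fin: "finite A" "finite B" "finite S" "finite T"
  using finV part(1) by (auto intro: finite_subset)

lemma cardAB: "card A \<le> card B" "card S \<le> card T" using ab by (auto simp: AB_conditions_def)

lemma n_eq: "n = card A + card B + card S + card T"
proof -
  have "card V = card (A \<union> B \<union> S \<union> T)" using part(1) by simp
  also have "\<dots> = card (A \<union> B \<union> S) + card T"
    using part fin by (intro card_Un_disjoint) auto
  also have "card (A \<union> B \<union> S) = card (A \<union> B) + card S"
    using part fin by (intro card_Un_disjoint) auto
  also have "card (A \<union> B) = card A + card B"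
    using part fin by (intro card_Un_disjoint) auto
  finally show ?thesis using cV by simp
qed

lemma n_pos: "real n \<ge> 200000"
proof -
  have "100 \<le> e4 * n" by (rule nbig)
  also have "\<dots> \<le> (1/2000) * n" using e4le by (intro mult_right_mono) auto
  finally show ?thesis by simp
qed

lemma ceil_le: "real_of_int \<lceil>real n / 2\<rceil> \<le> real n / 2 + 1"
  by (rule of_int_ceiling_le_add_one)
lemma floor_ge: "real_of_int \<lfloor>real n / 2\<rfloor> \<ge> real n / 2 - 1"
  using real_of_int_floor_gt_diff_one[of "real n / 2"] by linarith

lemma sizes: "real (card A) \<le> real n / 2 + 1 + e3 * n" "real (card B) \<le> real n / 2 + 1 + e3 * n"
  "real (card A) \<ge> real n / 2 - 1 - e3 * n" "real (card B) \<ge> real n / 2 - 1 - e3 * n"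
  "real (card S + card T) \<le> e3 * n"
  using ab ceil_le floor_ge unfolding AB_conditions_def
  apply -
  apply (elim conjE; linarith)+
  done

end


lemma choose_out: "finite F \<Longrightarrow> card F < card X \<Longrightarrow> \<exists>x\<in>X. x \<notin> F"
  by (metis card_mono not_le subsetI)

lemma card_diff_real: "finite Y \<Longrightarrow> real (card X) - real (card Y) \<le> real (card (X - Y))"
  using diff_card_le_card_Diff[of Y X] by linarith

lemma card_int_real: "finite C \<Longrightarrow> X \<subseteq> C \<Longrightarrow> Y \<subseteq> C \<Longrightarrow>
   real (card X) + real (card Y) - real (card C) \<le> real (card (X \<inter> Y))"
proof -
  assume a: "finite C" "X \<subseteq> C" "Y \<subseteq> C"
  then have "finite X" "finite Y" by (auto intro: finite_subset)
  then have "card (X \<union> Y) + card (X \<inter> Y) = card X + card Y" by (rule card_Un_Int[symmetric])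
  moreover have "card (X \<union> Y) \<le> card C" using a by (intro card_mono) auto
  ultimately show ?thesis by linarith
qed

context su begin

lemma clsV: "cls b \<subseteq> V" using subV by (auto simp: cls_def)
lemma finc: "finite (cls b)" using fin by (auto simp: cls_def)
lemma gd_cls: "gd b \<subseteq> cls b" by (auto simp: gd_def cls_def Ag_def Bg_def)
lemma cls_disj: "x \<in> cls b \<Longrightarrow> x \<in> A \<longleftrightarrow> b" "x \<in> cls b \<Longrightarrow> x \<in> B \<longleftrightarrow> \<not> b"
  using part(2) by (auto simp: cls_def)
lemma cls_size: "real (card (cls b)) \<le> real n / 2 + 1 + e3 * n"
  using sizes by (auto simp: cls_def)
lemma gd_AB: "x \<in> gd b \<Longrightarrow> x \<in> Ag \<union> Bg" by (auto simp: gd_def split: if_splits)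
lemma AgBg_cls: "x \<in> Ag \<union> Bg \<Longrightarrow> \<exists>b. x \<in> gd b" by (auto simp: gd_def)

lemma bip: "bip_semideg_ge E A B (real n / 50)" using ab by (simp add: AB_conditions_def)

lemma deg_cls: "x \<in> cls b \<Longrightarrow> real n / 50 \<le> real (card {y\<in>cls (\<not>b). stp p x y})"
  using bip by (cases b; cases "ori p") (auto simp: cls_def stp_def bip_semideg_ge_def dout_def din_def)

lemma deg_gd: "x \<in> gd b \<Longrightarrow> real n / 2 - e3 * n \<le> real (card {y\<in>cls (\<not>b). stp p x y})"
  by (cases b; cases "ori p") (auto simp: gd_def cls_def stp_def Ag_def Bg_def dout_def din_def)

lemma bad_size: "real (card (cls b - gd b)) \<le> e3 * n"
proof -
  have "cls True - gd True = {x \<in> A. \<not> (real (dout E B x) \<ge> real n / 2 - e3 * n \<and>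
                             real (din E B x) \<ge> real n / 2 - e3 * n)}"
    by (auto simp: cls_def gd_def Ag_def)
  moreover have "cls False - gd False = {x \<in> B. \<not> (real (dout E A x) \<ge> real n / 2 - e3 * n \<and>
                             real (din E A x) \<ge> real n / 2 - e3 * n)}"
    by (auto simp: cls_def gd_def Bg_def)
  ultimately show ?thesis using ab by (cases b) (auto simp: AB_conditions_def)
qed

lemma big_good: "X \<subseteq> cls b \<Longrightarrow> real (card X) - e3 * n \<le> real (card (X \<inter> gd b))"
proof -
  assume X: "X \<subseteq> cls b"
  have "X \<inter> gd b = X - (cls b - gd b)" using X by auto
  moreover have "real (card X) - real (card (cls b - gd b)) \<le> real (card (X - (cls b - gd b)))"
    using finc by (intro card_diff_real) auto
  ultimately show ?thesis using bad_size[of b] by simp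
qed

lemma attach_size: "c \<in> gd (\<not>b) \<Longrightarrow> X \<subseteq> cls b \<Longrightarrow>
   real (card X) - 2 * e3 * n - 1 \<le> real (card {a\<in>X. stp p c a})"
proof -
  assume c: "c \<in> gd (\<not>b)" and X: "X \<subseteq> cls b"
  have "{a\<in>X. stp p c a} = {y\<in>cls (\<not>\<not>b). stp p c y} \<inter> X" using X by auto
  moreover have "real (card {y\<in>cls (\<not>\<not>b). stp p c y}) + real (card X) - real (card (cls b))
     \<le> real (card ({y\<in>cls (\<not>\<not>b). stp p c y} \<inter> X))"
    using X finc by (intro card_int_real) auto
  moreover note deg_gd[OF c, of p] cls_size[of b]
  ultimately show ?thesis by simp
qed

end


datatype unt = U (uvs: "nat list") (uin: "nat set") (uinA: bool) (uout: "nat set") (uoutA: bool) (ush: nat)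

lemma card_snoc_int: "y \<notin> set P \<Longrightarrow> card (X \<inter> set (P @ [y])) = card (X \<inter> set P) + (if y \<in> X then 1 else 0)"
  by (auto simp: Int_insert_right)

context su begin

definition valid_unit :: "unt \<Rightarrow> bool" where
  "valid_unit u \<longleftrightarrow>
    ((\<exists>v. uvs u = [v]) \<or> (\<exists>v w. uvs u = [v, w] \<and> E v w)) \<and> set (uvs u) \<subseteq> V - A \<and>
    uin u \<subseteq> cls (uinA u) \<and> (\<forall>x\<in>uin u. E x (hd (uvs u))) \<and> real n / 50 \<le> real (card (uin u)) \<and>
    uout u \<subseteq> cls (uoutA u) \<and> (\<forall>x\<in>uout u. E (last (uvs u)) x) \<and> real n / 50 \<le> real (card (uout u)) \<and>
    int (of_bool (uinA u)) + int (of_bool (uoutA u)) - 1 - int (card (B \<inter> set (uvs u))) = - int (ush u)"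

end

locale bu = su +
  fixes us :: "unt list"
  assumes uv: "\<forall>u\<in>set us. valid_unit u" and ud: "distinct (concat (map uvs us))"
    and ucov: "S \<union> T \<subseteq> set (concat (map uvs us))"
    and ush_sum: "(\<Sum>u\<leftarrow>us. ush u) = card B - card A"
    and ulen: "length us \<le> card S + card T + (card B - card A)"
begin

definition "R = set (concat (map uvs us))"
definition "pl m = set (concat (map uvs (take m us)))"
definition "shs m = (\<Sum>u\<leftarrow>take m us. ush u)"
definition "Dv P = int (card (A \<inter> set P)) - int (card (B \<inter> set P))"
definition "K = length us + 2 * sigma_cyc n ori + 1"
definition "Lmax = 6 * K + 8"

definition st :: "nat list \<Rightarrow> nat \<Rightarrow> bool" where
  "st P m \<longleftrightarrow> P \<noteq> [] \<and> distinct P \<and> set P \<subseteq> V \<and> hd P \<in> A \<and> chain E ori 0 P \<and>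
     last P \<in> Ag \<union> Bg \<and> set P \<inter> R = pl m \<and>
     Dv P = (if last P \<in> A then 1 else 0) - int (shs m) \<and> m \<le> length us"

lemma unit_len: "u \<in> set us \<Longrightarrow> length (uvs u) \<le> 2"
  using uv by (auto simp: valid_unit_def)

lemma cardR: "card R \<le> 2 * length us"
proof -
  have "card R \<le> length (concat (map uvs us))" unfolding R_def by (rule card_length)
  also have "\<dots> = (\<Sum>u\<leftarrow>us. length (uvs u))" by (simp add: length_concat comp_def)
  also have "\<dots> \<le> (\<Sum>u\<leftarrow>us. 2)" by (intro sum_list_mono unit_len)
  also have "\<dots> = 2 * length us" by (simp add: sum_list_triv)
  finally show ?thesis .
qed

lemma num_facts: "real (card B - card A) \<le> 2 * e3 * n + 2"
  "real (length us) \<le> 3 * e3 * n + 2" "e3 * n \<le> e4 * n / 100" "e4 * n \<le> n / 2000"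
proof -
  have "real (card B - card A) = real (card B) - real (card A)" using cardAB by (simp add: of_nat_diff)
  then show 1: "real (card B - card A) \<le> 2 * e3 * n + 2" using sizes(2,3) by linarith
  have "real (length us) \<le> real (card S + card T) + real (card B - card A)"
    using ulen by (metis of_nat_add of_nat_mono)
  then show "real (length us) \<le> 3 * e3 * n + 2" using 1 sizes(5) by linarith
  show "e3 * n \<le> e4 * n / 100" using mult_right_mono[OF e3le, of "real n"] by simp
  show "e4 * n \<le> n / 2000" using e4le mult_right_mono[OF e4le, of "real n"] by simp
qed

lemma room: "real Lmax + real (card R) + 2 < real n / 50 - 3 * e3 * n - 1"
proof -
  have "real Lmax = 6 * real (length us) + 12 * real (sigma_cyc n ori) + 14"
    by (simp add: Lmax_def K_def)
  moreover have "real (card R) \<le> 2 * real (length us)" using cardR by (simp add: of_nat_mono)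
  moreover have "0 \<le> e3 * n" using e3pos by simp
  ultimately show ?thesis using num_facts sig n_pos by linarith
qed

lemma fin_len: "real (6 * K + 1) \<le> 21 * e4 * n"
proof -
  have "real (6 * K + 1) = 6 * real (length us) + 12 * real (sigma_cyc n ori) + 7"
    by (simp add: K_def)
  then show ?thesis using num_facts sig nbig by linarith
qed

lemma Lmax_n: "Lmax \<le> n"
proof -
  have "0 \<le> e3 * n" using e3pos by simp
  then have "real Lmax \<le> real n" using room n_pos by linarith
  then show ?thesis by simp
qed

lemma Dv_snoc: "y \<notin> set P \<Longrightarrow> Dv (P @ [y]) = Dv P + (if y \<in> A then 1 else 0) - (if y \<in> B then 1 else 0)"
  unfolding Dv_def by (simp add: card_snoc_int)

lemma finR: "finite R" by (simp add: R_def)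

lemma choose: "length P \<le> Lmax \<Longrightarrow> real n / 50 - 3 * e3 * n - 1 \<le> real (card X) \<Longrightarrow>
   \<exists>x\<in>X. x \<notin> set P \<and> x \<notin> R \<and> x \<noteq> a"
proof -
  assume l: "length P \<le> Lmax" and X: "real n / 50 - 3 * e3 * n - 1 \<le> real (card X)"
  have "card (insert a (set P \<union> R)) \<le> card (set P \<union> R) + 1" by (simp add: card_insert_if finR)
  moreover have "card (set P \<union> R) \<le> card (set P) + card R" by (rule card_Un_le)
  moreover have "card (set P) \<le> length P" by (rule card_length)
  ultimately have "real (card (insert a (set P \<union> R))) \<le> real Lmax + real (card R) + 1"
    using l by linarith
  then have "card (insert a (set P \<union> R)) < card X" using room X by linarith
  then obtain x where "x \<in> X" "x \<notin> insert a (set P \<union> R)"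
    using choose_out[of "insert a (set P \<union> R)" X] finR by auto
  then show ?thesis by auto
qed

end

context bu begin

lemma R_sub: "R \<subseteq> V - A"
  using uv unfolding R_def valid_unit_def by auto

lemma st_init: "\<exists>P. st P 0 \<and> length P = 1"
proof -
  have "real (card A) - e3 * n \<le> real (card (A \<inter> gd True))"
    using big_good[of A True] by (simp add: cls_def)
  moreover have "0 \<le> e3 * n" using e3pos by simp
  ultimately have "card (A \<inter> gd True) > 0" using sizes(3) n_pos num_facts by linarith
  then obtain a where a: "a \<in> A" "a \<in> Ag" by (auto simp: gd_def card_gt_0_iff)
  have "st [a] 0" using a R_sub subV part(2)
    by (auto simp: st_def pl_def Dv_def shs_def)
  then show ?thesis by auto
qed

lemma alt: assumes "st P m" "length P + 1 \<le> Lmax" "last P \<in> cls b"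
  shows "\<exists>y\<in>gd (\<not>b). st (P @ [y]) m"
proof -
  let ?p = "length P - 1"
  define X where "X = {y\<in>cls (\<not>b). stp ?p (last P) y} \<inter> gd (\<not>b)"
  have "real n / 50 - e3 * n \<le> real (card X)"
    using deg_cls[OF assms(3), of ?p] big_good[of "{y\<in>cls (\<not>b). stp ?p (last P) y}" "\<not>b"]
    unfolding X_def by auto
  moreover have "0 \<le> e3 * n" using e3pos by simp
  ultimately have "real n / 50 - 3 * e3 * n - 1 \<le> real (card X)" by linarith
  then obtain y where y: "y \<in> X" "y \<notin> set P" "y \<notin> R"
    using choose[of P X 0] assms(2) by auto
  have yc: "y \<in> cls (\<not>b)" "y \<in> gd (\<not>b)" "stp ?p (last P) y" using y(1) by (auto simp: X_def)
  have P: "P \<noteq> []" "distinct P" "set P \<subseteq> V" "hd P \<in> A" "chain E ori 0 P" "set P \<inter> R = pl m"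
     "Dv P = (if last P \<in> A then 1 else 0) - int (shs m)" "m \<le> length us"
    using assms(1) by (auto simp: st_def)
  have "st (P @ [y]) m"
    unfolding st_def
  proof (intro conjI)
    show "chain E ori 0 (P @ [y])" using P(1,5) yc(3) chain_snoc[of P E ori 0 y] by (simp add: stp_def)
    show "Dv (P @ [y]) = (if last (P @ [y]) \<in> A then 1 else 0) - int (shs m)"
      using Dv_snoc[OF y(2)] P(7) cls_disj[OF yc(1)] cls_disj[OF assms(3)] by auto
  qed (use P y yc gd_AB clsV[of "\<not>b"] in auto)
  then show ?thesis using yc by auto
qed

lemma altk: "st P m \<Longrightarrow> length P + k \<le> Lmax \<Longrightarrow> \<exists>P'. st P' m \<and> length P' = length P + k"
proof (induction k)
  case 0 then show ?case by auto
next
  case (Suc k)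
  then obtain P1 where P1: "st P1 m" "length P1 = length P + k" by auto
  have "last P1 \<in> Ag \<union> Bg" using P1 by (simp add: st_def)
  then obtain b where "last P1 \<in> cls b" using gd_cls AgBg_cls by blast
  then obtain y where "st (P1 @ [y]) m" using alt[OF P1(1)] P1(2) Suc.prems by fastforce
  then show ?case using P1(2) by auto
qed

end


lemma chain_append:
  "xs \<noteq> [] \<Longrightarrow> chain E ori p (xs @ ys) \<longleftrightarrow> chain E ori p xs \<and> chain E ori (p + length xs - 1) (last xs # ys)"
proof (induction xs arbitrary: p)
  case Nil then show ?case by simp
next
  case (Cons x xs)
  then show ?case by (cases xs) auto
qed

lemma concat_split: "m < length xs \<Longrightarrow>
  concat (map f xs) = concat (map f (take m xs)) @ f (xs!m) @ concat (map f (drop (Suc m) xs))"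
proof (induction xs arbitrary: m)
  case Nil then show ?case by simp
next
  case (Cons x xs) then show ?case by (cases m) auto
qed

lemma distinct_concat_nth:
  assumes "distinct (concat (map f xs))" "m < length xs"
  shows "set (f (xs!m)) \<inter> set (concat (map f (take m xs))) = {}"
  using assms(1) concat_split[OF assms(2), of f] by (simp only: distinct_append set_append) blast

context bu begin

lemma Dv_app: "set ws \<inter> set P = {} \<Longrightarrow> Dv (P @ ws) = Dv P + int (card (A \<inter> set ws)) - int (card (B \<inter> set ws))"
proof -
  assume d: "set ws \<inter> set P = {}"
  have "\<And>X. card (X \<inter> set (P @ ws)) = card (X \<inter> set P) + card (X \<inter> set ws)"
    using d by (subst card_Un_disjoint[symmetric]) (auto simp: Int_Un_distrib)
  then show ?thesis unfolding Dv_def by simp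
qed

lemma vfacts: "u \<in> set us \<Longrightarrow> valid_unit u" using uv by auto

lemma place_core:
  assumes P: "st P m" and m: "m < length us" and L: "length P + 4 \<le> Lmax"
    and o1: "ori (length P) = d" and o2: "ori (length P + 1) = d" and o3: "ori (length P + 2) = d"
    and c: "last P \<in> gd (\<not> (if d then uinA (us!m) else uoutA (us!m)))"
  shows "\<exists>P'. st P' (Suc m) \<and> length P' \<le> length P + 4"
proof -
  define u where "u = us!m"
  have vu: "valid_unit u" using m vfacts unfolding u_def by auto
  define xA where "xA = (if d then uinA u else uoutA u)"
  define yA where "yA = (if d then uoutA u else uinA u)"
  define X where "X = (if d then uin u else uout u)"
  define Y where "Y = (if d then uout u else uin u)"
  define vs where "vs = uvs u"
  define seg where "seg = (if d then vs else rev vs)"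
  have X: "X \<subseteq> cls xA" "real n / 50 \<le> real (card X)" "Y \<subseteq> cls yA" "real n / 50 \<le> real (card Y)"
    using vu by (auto simp: X_def xA_def Y_def yA_def valid_unit_def)
  have c': "last P \<in> gd (\<not> xA)" using c by (cases d) (simp_all add: xA_def u_def)
  have Pf: "P \<noteq> []" "distinct P" "set P \<subseteq> V" "hd P \<in> A" "chain E ori 0 P" "set P \<inter> R = pl m"
     "Dv P = (if last P \<in> A then 1 else 0) - int (shs m)" "m \<le> length us"
    using P by (auto simp: st_def)
  have e3n: "0 \<le> e3 * n" using e3pos by simp
  have "real n / 50 - 3 * e3 * n - 1 \<le> real (card {a\<in>X. stp (length P - 1) (last P) a})"
    using attach_size[OF c' X(1), of "length P - 1"] X(2) e3n by linarith
  then obtain a where a: "a \<in> X" "stp (length P - 1) (last P) a" "a \<notin> set P" "a \<notin> R"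
    using choose[of P "{a\<in>X. stp (length P - 1) (last P) a}" 0] L by auto
  have "real n / 50 - 3 * e3 * n - 1 \<le> real (card (Y \<inter> gd yA))"
    using big_good[OF X(3)] X(4) e3n by linarith
  then obtain e where e: "e \<in> Y" "e \<in> gd yA" "e \<notin> set P" "e \<notin> R" "e \<noteq> a"
    using choose[of P "Y \<inter> gd yA" a] L by auto
  have uR: "set vs \<subseteq> R" using nth_mem[OF m] unfolding vs_def u_def R_def by auto
  have vsP: "set vs \<inter> set P = {}"
    using distinct_concat_nth[OF ud m] Pf(6) uR unfolding vs_def u_def pl_def by blast
  have vsA: "set vs \<subseteq> V - A" using vu by (simp add: vs_def valid_unit_def)
  have shape: "(\<exists>v. vs = [v]) \<or> (\<exists>v w. vs = [v, w] \<and> E v w)" using vu by (simp add: vs_def valid_unit_def)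
  have ain: "\<forall>x\<in>uin u. E x (hd vs)" "\<forall>x\<in>uout u. E (last vs) x" using vu by (auto simp: vs_def valid_unit_def)
  have segs: "set seg = set vs" "distinct seg" "length seg \<le> 2" "seg \<noteq> []"
    using shape Eirr by (auto simp: seg_def)
  have ch1: "chain E ori (length P) (a # seg)"
    using shape a(1) ain o1 o2 by (cases d) (auto simp: seg_def X_def)
  have ch2: "if ori (length P + length seg) then E (last seg) e else E e (last seg)"
    using shape e(1) ain o2 o3 by (cases d) (auto simp: seg_def Y_def)
  define P' where "P' = ((P @ [a]) @ seg) @ [e]"
  have chP': "chain E ori 0 P'"
  proof -
    have "chain E ori 0 (P @ [a])" using chain_snoc[of P E ori 0 a] Pf(1,5) a(2) by (simp add: stp_def)
    then have "chain E ori 0 ((P @ [a]) @ seg)" using chain_append[of "P @ [a]" E ori 0 seg] ch1 by simp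
    then show ?thesis using chain_snoc[of "(P @ [a]) @ seg" E ori 0 e] ch2 segs(4) unfolding P'_def
      by (simp add: last_append)
  qed
  have aseg: "a \<notin> set seg" "e \<notin> set seg" using a(4) e(4) uR segs(1) by auto
  have ac: "a \<in> cls xA" "e \<in> cls yA" using a(1) e(1) X by auto
  have dist: "distinct P'" unfolding P'_def using Pf(2) a(3) e(3,5) aseg segs vsP by auto
  have Dv1: "Dv (P @ [a]) = Dv P + (if a \<in> A then 1 else 0) - (if a \<in> B then 1 else 0)"
    using Dv_snoc[OF a(3)] .
  have Dv2: "Dv ((P @ [a]) @ seg) = Dv (P @ [a]) + int (card (A \<inter> set seg)) - int (card (B \<inter> set seg))"
    using vsP a(4) uR segs(1) by (intro Dv_app) auto
  have Dv3: "Dv P' = Dv ((P @ [a]) @ seg) + (if e \<in> A then 1 else 0) - (if e \<in> B then 1 else 0)"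
    unfolding P'_def using e(3,5) aseg(2) by (intro Dv_snoc) auto
  have segA: "A \<inter> set seg = {}" using vsA segs(1) by auto
  have bal: "int (of_bool (uinA u)) + int (of_bool (uoutA u)) - 1 - int (card (B \<inter> set vs)) = - int (ush u)"
    using vu by (simp add: valid_unit_def vs_def)
  have bal': "int (of_bool xA) + int (of_bool yA) - 1 - int (card (B \<inter> set seg)) = - int (ush u)"
    using bal segs(1) by (cases d) (auto simp: xA_def yA_def)
  have lastc: "last P \<in> A \<longleftrightarrow> \<not> xA" using c' gd_cls cls_disj by blast
  have shsS: "shs (Suc m) = shs m + ush u" unfolding shs_def u_def using m by (simp add: take_Suc_conv_app_nth)
  have plS: "pl (Suc m) = pl m \<union> set vs" unfolding pl_def vs_def u_def using m by (simp add: take_Suc_conv_app_nth)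
  have lastP': "last P' = e" by (simp add: P'_def)
  have DvP': "Dv P' = (if last P' \<in> A then 1 else 0) - int (shs (Suc m))"
    using Dv1 Dv2 Dv3 Pf(7) segA bal' lastc shsS lastP' cls_disj[OF ac(1)] cls_disj[OF ac(2)]
    by (cases xA; cases yA) auto
  have "st P' (Suc m)" unfolding st_def
  proof (intro conjI)
    show "set P' \<subseteq> V" using Pf(3) ac clsV vsA segs(1) by (auto simp: P'_def)
    show "hd P' \<in> A" using Pf(1,4) by (simp add: P'_def)
    show "last P' \<in> Ag \<union> Bg" using lastP' e(2) gd_AB by auto
    show "set P' \<inter> R = pl (Suc m)" using Pf(6) plS a(4) e(4) uR segs(1) by (auto simp: P'_def)
  qed (use P'_def dist chP' DvP' m in auto)
  moreover have "length P' \<le> length P + 4" using segs(3) by (simp add: P'_def)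
  ultimately show ?thesis by auto
qed

end


lemma set_Suc_split: fixes M :: nat shows "{m. 1 \<le> m \<and> m \<le> Suc M \<and> Q m} = {m. 1 \<le> m \<and> m \<le> M \<and> Q m} \<union> (if Q (Suc M) then {Suc M} else {})"
  by (auto simp: le_Suc_eq)

lemma card_Suc_split: fixes M :: nat shows "card {m. 1 \<le> m \<and> m \<le> Suc M \<and> Q m} = card {m. 1 \<le> m \<and> m \<le> M \<and> Q m} + (if Q (Suc M) then 1 else 0)"
proof -
  have f: "finite {m. 1 \<le> m \<and> m \<le> M \<and> Q m}" by (rule finite_subset[of _ "{..M}"]) auto
  show ?thesis unfolding set_Suc_split using f by (auto simp: card_insert_if)
qed

lemma updown: fixes M :: nat and f :: "nat \<Rightarrow> bool" shows "int (card {m. 1 \<le> m \<and> m \<le> M \<and> \<not> f (m-1) \<and> f m}) - int (card {m. 1 \<le> m \<and> m \<le> M \<and> f (m-1) \<and> \<not> f m})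
   = (if f M then 1 else 0) - (if f 0 then 1 else 0)"
proof (induction M)
  case 0
  have "{m::nat. 1 \<le> m \<and> m \<le> 0 \<and> \<not> f (m-1) \<and> f m} = {}" "{m::nat. 1 \<le> m \<and> m \<le> 0 \<and> f (m-1) \<and> \<not> f m} = {}" by auto
  then show ?case unfolding \<open>{m::nat. 1 \<le> m \<and> m \<le> 0 \<and> \<not> f (m-1) \<and> f m} = {}\<close> by simp
next
  case (Suc M)
  show ?case unfolding card_Suc_split using Suc.IH by (cases "f M"; cases "f (Suc M)") simp_all
qed

lemma nonflat_bound: fixes M :: nat and f :: "nat \<Rightarrow> bool" shows "card {m. 1 \<le> m \<and> m \<le> M \<and> f (m-1) \<noteq> f m} \<le> 2 * card {m. 1 \<le> m \<and> m \<le> M \<and> f (m-1) \<and> \<not> f m} + 1"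
proof -
  define a where "a = card {m. 1 \<le> m \<and> m \<le> M \<and> \<not> f (m-1) \<and> f m}"
  define b where "b = card {m. 1 \<le> m \<and> m \<le> M \<and> f (m-1) \<and> \<not> f m}"
  have "{m. 1 \<le> m \<and> m \<le> M \<and> f (m-1) \<noteq> f m} = {m. 1 \<le> m \<and> m \<le> M \<and> \<not> f (m-1) \<and> f m} \<union> {m. 1 \<le> m \<and> m \<le> M \<and> f (m-1) \<and> \<not> f m}"
    by auto
  then have c: "card {m. 1 \<le> m \<and> m \<le> M \<and> f (m-1) \<noteq> f m} \<le> a + b"
    unfolding a_def b_def by (simp only:) (rule card_Un_le)
  have "int a - int b \<le> 1" using updown[of M f] unfolding a_def b_def by (simp split: if_split)
  then have "a \<le> b + 1" by linarith
  then show ?thesis using c unfolding b_def by linarith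
qed

context su begin

lemma sinks_le: assumes M: "M < n" shows "card {m. 1 \<le> m \<and> m \<le> M \<and> ori (m-1) \<and> \<not> ori m} \<le> sigma_cyc n ori"
  unfolding sigma_cyc_def
proof (rule card_mono)
  show "finite {i. i < n \<and> \<not> ori i \<and> ori ((i + n - 1) mod n)}" by (rule finite_subset[of _ "{..<n}"]) auto
  show "{m. 1 \<le> m \<and> m \<le> M \<and> ori (m - 1) \<and> \<not> ori m} \<subseteq> {i. i < n \<and> \<not> ori i \<and> ori ((i + n - 1) mod n)}"
  proof
    fix m assume "m \<in> {m. 1 \<le> m \<and> m \<le> M \<and> ori (m - 1) \<and> \<not> ori m}"
    then have m: "1 \<le> m" "m \<le> M" "ori (m-1)" "\<not> ori m" by auto
    have mn: "m < n" using m(2) M by linarith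
    have e1: "m + n - 1 = (m - 1) + n" using m(1) by arith
    have e2: "(m - 1 + n) mod n = m - 1" using mn by simp
    have "ori ((m + n - 1) mod n)" unfolding e1 e2 by (rule m(3))
    then show "m \<in> {i. i < n \<and> \<not> ori i \<and> ori ((i + n - 1) mod n)}" using m(4) mn by blast
  qed
qed

end

context bu begin

definition "clean i \<longleftrightarrow> ori (6*i+1) = ori (6*i+2) \<and> ori (6*i+2) = ori (6*i+3) \<and> ori (6*i+3) = ori (6*i+4)"
definition "cc i = card {j. j < i \<and> clean j}"

lemma place: assumes P: "st P m" and m: "m < length us" and L: "length P + 6 \<le> Lmax"
  and o: "ori (length P) = ori (length P + 1)" "ori (length P + 1) = ori (length P + 2)" "ori (length P + 2) = ori (length P + 3)"
  shows "\<exists>P'. st P' (Suc m) \<and> length P' \<le> length P + 5"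
proof -
  define d where "d = ori (length P)"
  define xA where "xA = (if d then uinA (us!m) else uoutA (us!m))"
  have "last P \<in> Ag \<union> Bg" using P by (simp add: st_def)
  then obtain b where b: "last P \<in> gd b" using AgBg_cls by blast
  show ?thesis
  proof (cases "b = xA")
    case False
    then have c: "last P \<in> gd (\<not> (if d then uinA (us!m) else uoutA (us!m)))" using b xA_def by (cases b) auto
    have o': "ori (length P) = d" "ori (length P + 1) = d" "ori (length P + 2) = d" unfolding d_def using o by metis+
    have L': "length P + 4 \<le> Lmax" using L by simp
    from place_core[OF P m L' o' c] show ?thesis by auto
  next
    case True
    then have "last P \<in> cls xA" using b gd_cls by auto
    then obtain y where y: "y \<in> gd (\<not> xA)" "st (P @ [y]) m" using alt[OF P] L by fastforce
    have eqs: "length (P@[y]) = length P + 1" "length (P@[y]) + 1 = length P + 2" "length (P@[y]) + 2 = length P + 3" by simp_all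
    have o': "ori (length (P@[y])) = d" "ori (length (P@[y]) + 1) = d" "ori (length (P@[y]) + 2) = d"
      unfolding d_def using o by (metis eqs)+
    have c: "last (P@[y]) \<in> gd (\<not> (if d then uinA (us!m) else uoutA (us!m)))" using y(1) xA_def by simp
    have L': "length (P@[y]) + 4 \<le> Lmax" using L by simp
    have "\<exists>P'. st P' (Suc m) \<and> length P' \<le> length (P @ [y]) + 4"
      by (rule place_core[OF y(2) m L' o' c])
    then show ?thesis by auto
  qed
qed

lemma block: assumes P: "st P m" and len: "length P = 6*i+1" and i: "i < K"
  shows "\<exists>P'. st P' (if clean i \<and> m < length us then Suc m else m) \<and> length P' = 6*(Suc i)+1"
proof -
  have L: "length P + 6 \<le> Lmax" using len i by (simp add: Lmax_def)
  obtain P1 where P1: "st P1 (if clean i \<and> m < length us then Suc m else m)" "length P1 \<le> length P + 6"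
  proof (cases "clean i \<and> m < length us")
    case True
    have e: "length P = 6*i+1" "length P + 1 = 6*i+2" "length P + 2 = 6*i+3" "length P + 3 = 6*i+4"
      using len by simp_all
    have "ori (length P) = ori (length P + 1)" "ori (length P + 1) = ori (length P + 2)" "ori (length P + 2) = ori (length P + 3)"
      using True unfolding clean_def by (metis e)+
    then obtain P' where "st P' (Suc m)" "length P' \<le> length P + 5" using place[OF P _ L] True by blast
    then show ?thesis using that True by auto
  next
    case False
    then show ?thesis using that P by auto
  qed
  obtain P2 where "st P2 (if clean i \<and> m < length us then Suc m else m)" "length P2 = length P1 + (6*(Suc i)+1 - length P1)"
    using altk[OF P1(1), of "6*(Suc i)+1 - length P1"] P1(2) len L by fastforce
  then show ?thesis using P1(2) len by auto
qed

lemma cc_Suc: "cc (Suc i) = cc i + (if clean i then 1 else 0)"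
proof -
  have "{j. j < Suc i \<and> clean j} = {j. j < i \<and> clean j} \<union> (if clean i then {i} else {})" by (auto simp: less_Suc_eq)
  then show ?thesis unfolding cc_def by (auto simp: card_insert_if)
qed

lemma blocks: "i \<le> K \<Longrightarrow> \<exists>P. st P (min (length us) (cc i)) \<and> length P = 6*i+1"
proof (induction i)
  case 0 then show ?case using st_init by (simp add: cc_def)
next
  case (Suc i)
  then obtain P where P: "st P (min (length us) (cc i))" "length P = 6*i+1" by auto
  from block[OF P] Suc.prems obtain P' where
    "st P' (if clean i \<and> min (length us) (cc i) < length us then Suc (min (length us) (cc i)) else min (length us) (cc i))"
    "length P' = 6*(Suc i)+1" by auto
  moreover have "(if clean i \<and> min (length us) (cc i) < length us then Suc (min (length us) (cc i)) else min (length us) (cc i))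
     = min (length us) (cc (Suc i))" by (auto simp: cc_Suc)
  ultimately show ?case by auto
qed

lemma cc_K: "length us \<le> cc K"
proof -
  define NF where "NF = {m. 1 \<le> m \<and> m \<le> 6*K \<and> ori (m-1) \<noteq> ori m}"
  define f where "f j = (if ori (6*j+1) \<noteq> ori (6*j+2) then 6*j+2 else if ori (6*j+2) \<noteq> ori (6*j+3) then 6*j+3 else 6*j+4)" for j
  have fdiv: "f j div 6 = j" for j unfolding f_def by auto
  have "inj_on f {j. j < K \<and> \<not> clean j}" by (metis fdiv inj_onI)
  moreover have "f ` {j. j < K \<and> \<not> clean j} \<subseteq> NF"
    unfolding NF_def f_def clean_def by (auto simp: add.commute)
  moreover have "finite NF" unfolding NF_def by (rule finite_subset[of _ "{..6*K}"]) auto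
  ultimately have unc: "card {j. j < K \<and> \<not> clean j} \<le> card NF" by (rule card_inj_on_le)
  have "card NF \<le> 2 * card {m. 1 \<le> m \<and> m \<le> 6*K \<and> ori (m-1) \<and> \<not> ori m} + 1"
    unfolding NF_def by (rule nonflat_bound)
  moreover have "6*K < n" using Lmax_n by (simp add: Lmax_def)
  ultimately have "card NF \<le> 2 * sigma_cyc n ori + 1" using sinks_le by fastforce
  moreover have "card {j. j < K \<and> \<not> clean j} + cc K = K"
  proof -
    have "{j. j < K \<and> \<not> clean j} \<union> {j. j < K \<and> clean j} = {..<K}" by auto
    moreover have "card ({j. j < K \<and> \<not> clean j} \<union> {j. j < K \<and> clean j}) = card {j. j < K \<and> \<not> clean j} + card {j. j < K \<and> clean j}"
      by (rule card_Un_disjoint) auto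
    ultimately show ?thesis unfolding cc_def by simp
  qed
  ultimately show ?thesis using unc by (simp add: K_def)
qed

end

context bu begin

theorem bu_main: "\<exists>P. exceptional_cover n ori V E A B S T P \<and> real (length P - 1) \<le> 21 * e4 * n"
proof -
  obtain P0 where P0: "st P0 (min (length us) (cc K))" "length P0 = 6*K+1" using blocks[of K] by auto
  have mm: "min (length us) (cc K) = length us" using cc_K by simp
  obtain P where P: "st P (length us)" "last P \<in> A" "length P \<le> 6*K+2"
  proof (cases "last P0 \<in> A")
    case True then show ?thesis using that P0 mm by auto
  next
    case False
    have "last P0 \<in> Ag \<union> Bg" using P0(1) by (simp add: st_def)
    then have "last P0 \<in> cls False" using False by (auto simp: cls_def Ag_def Bg_def)
    then obtain y where y: "y \<in> gd True" "st (P0 @ [y]) (length us)"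
      using alt[of P0 "length us" False] P0 mm by (auto simp: Lmax_def)
    then show ?thesis using that P0(2) gd_cls[of True] by (auto simp: cls_def)
  qed
  have Pf: "P \<noteq> []" "distinct P" "set P \<subseteq> V" "hd P \<in> A" "chain E ori 0 P" "set P \<inter> R = pl (length us)"
     "Dv P = (if last P \<in> A then 1 else 0) - int (shs (length us))"
    using P(1) by (auto simp: st_def)
  have lenn: "length P \<le> n" using P(3) Lmax_n by (simp add: Lmax_def)
  have copy: "copy_of_subpath n ori V E 0 P"
    unfolding copy_of_subpath_def
  proof (intro conjI allI impI)
    show "0 < n" using n_pos by simp
    fix m assume m: "Suc m < length P"
    then have "(0 + m) mod n = m" using lenn by simp
    then show "if ori ((0 + m) mod n) then E (P ! m) (P ! Suc m) else E (P ! Suc m) (P ! m)"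
      using chain_nth[OF Pf(5) m] by simp
  qed (use Pf lenn in auto)
  have cov: "S \<union> T \<subseteq> set P" using Pf(6) ucov unfolding pl_def R_def by auto
  have Dv1: "Dv P = 1 - (int (card B) - int (card A))"
    using Pf(7) P(2) ush_sum cardAB unfolding shs_def by (simp add: of_nat_diff)
  have cA: "card (A - set P) = card A - card (A \<inter> set P)" using fin by (simp add: card_Diff_subset_Int)
  have cB: "card (B - set P) = card B - card (B \<inter> set P)" using fin by (simp add: card_Diff_subset_Int)
  have "card (A \<inter> set P) \<le> card A" "card (B \<inter> set P) \<le> card B" using fin by (simp_all add: card_mono)
  then have bal: "card (A - set P) + 1 = card (B - set P)" using Dv1 cA cB unfolding Dv_def by linarith
  have "exceptional_cover n ori V E A B S T P"
    unfolding exceptional_cover_def using copy cov Pf(4) P(2) bal by blast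
  moreover have "real (length P - 1) \<le> 21 * e4 * n"
  proof -
    have "length P - 1 \<le> 6*K+1" using P(3) by simp
    then have "real (length P - 1) \<le> real (6*K+1)" by (simp only: of_nat_le_iff)
    then show ?thesis using fin_len by linarith
  qed
  ultimately show ?thesis by auto
qed

end


lemma greedy_matching:
  fixes Eh :: "(nat \<times> nat) set" and D :: real
  assumes "finite Eh" "\<forall>e\<in>Eh. fst e \<noteq> snd e"
    "\<forall>v. real (card {e\<in>Eh. fst e = v \<or> snd e = v}) \<le> D" "0 < D" "2 * D * real m \<le> real (card Eh)"
  shows "\<exists>M \<subseteq> Eh. card M = m \<and> (\<forall>p\<in>M. \<forall>q\<in>M. p \<noteq> q \<longrightarrow> {fst p, snd p} \<inter> {fst q, snd q} = {})"
  using assms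
proof (induction m arbitrary: Eh)
  case 0 then show ?case by (intro exI[of _ "{}"]) auto
next
  case (Suc m)
  have "0 < 2 * D * real (Suc m)" using Suc.prems(4) by simp
  then have "0 < card Eh" using Suc.prems(5) by linarith
  then obtain e0 where e0: "e0 \<in> Eh" by (auto simp: card_gt_0_iff)
  define Eh' where "Eh' = {e\<in>Eh. {fst e, snd e} \<inter> {fst e0, snd e0} = {}}"
  have sub: "Eh - Eh' \<subseteq> {e\<in>Eh. fst e = fst e0 \<or> snd e = fst e0} \<union> {e\<in>Eh. fst e = snd e0 \<or> snd e = snd e0}"
    unfolding Eh'_def by auto
  have "card (Eh - Eh') \<le> card {e\<in>Eh. fst e = fst e0 \<or> snd e = fst e0} + card {e\<in>Eh. fst e = snd e0 \<or> snd e = snd e0}"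
    by (rule order_trans[OF card_mono[OF _ sub] card_Un_le]) (use Suc.prems(1) in auto)
  then have "real (card (Eh - Eh')) \<le> real (card {e\<in>Eh. fst e = fst e0 \<or> snd e = fst e0}) + real (card {e\<in>Eh. fst e = snd e0 \<or> snd e = snd e0})"
    by linarith
  then have c1: "real (card (Eh - Eh')) \<le> 2 * D" using Suc.prems(3)[rule_format, of "fst e0"] Suc.prems(3)[rule_format, of "snd e0"]
    by linarith
  have fE': "finite Eh'" using Suc.prems(1) unfolding Eh'_def by auto
  have "Eh' \<subseteq> Eh" unfolding Eh'_def by auto
  then have "card (Eh - Eh') = card Eh - card Eh'" using fE' by (rule card_Diff_subset[rotated])
  moreover have "card Eh' \<le> card Eh" using \<open>Eh' \<subseteq> Eh\<close> Suc.prems(1) by (rule card_mono[rotated])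
  ultimately have "card Eh = card Eh' + card (Eh - Eh')" by simp
  then have c2: "2 * D * real m \<le> real (card Eh')" using c1 Suc.prems(5) by (simp add: algebra_simps)
  have deg': "\<forall>v. real (card {e\<in>Eh'. fst e = v \<or> snd e = v}) \<le> D"
  proof
    fix v
    have "card {e\<in>Eh'. fst e = v \<or> snd e = v} \<le> card {e\<in>Eh. fst e = v \<or> snd e = v}"
      by (rule card_mono) (use Suc.prems(1) Eh'_def in auto)
    then have "real (card {e\<in>Eh'. fst e = v \<or> snd e = v}) \<le> real (card {e\<in>Eh. fst e = v \<or> snd e = v})" by simp
    then show "real (card {e\<in>Eh'. fst e = v \<or> snd e = v}) \<le> D" using Suc.prems(3) by (meson order_trans)
  qed
  obtain M where M: "M \<subseteq> Eh'" "card M = m" "\<forall>p\<in>M. \<forall>q\<in>M. p \<noteq> q \<longrightarrow> {fst p, snd p} \<inter> {fst q, snd q} = {}"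
    using Suc.IH[OF fE' _ deg' Suc.prems(4) c2] Suc.prems(2) unfolding Eh'_def by auto
  have e0M: "e0 \<notin> M" using M(1) unfolding Eh'_def by auto
  have fM: "finite M" using M(1) fE' by (rule finite_subset)
  show ?case
  proof (intro exI[of _ "insert e0 M"] conjI)
    show "insert e0 M \<subseteq> Eh" using M(1) e0 unfolding Eh'_def by auto
    show "card (insert e0 M) = Suc m" using fM e0M M(2) by simp
    show "\<forall>p\<in>insert e0 M. \<forall>q\<in>insert e0 M. p \<noteq> q \<longrightarrow> {fst p, snd p} \<inter> {fst q, snd q} = {}"
      using M(1,3) unfolding Eh'_def by blast
  qed
qed



lemma distinct_pairs:
  "distinct xs \<Longrightarrow> \<forall>p\<in>set xs. fst p \<noteq> snd p \<Longrightarrow>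
   \<forall>p\<in>set xs. \<forall>q\<in>set xs. p \<noteq> q \<longrightarrow> {fst p, snd p} \<inter> {fst q, snd q} = {} \<Longrightarrow>
   distinct (concat (map (\<lambda>p. [fst p, snd p]) xs))"
proof (induction xs)
  case Nil then show ?case by simp
next
  case (Cons p xs)
  have "\<forall>q\<in>set xs. {fst p, snd p} \<inter> {fst q, snd q} = {}" using Cons.prems by auto
  then have "fst p \<notin> set (concat (map (\<lambda>p. [fst p, snd p]) xs))" "snd p \<notin> set (concat (map (\<lambda>p. [fst p, snd p]) xs))"
    by auto
  then show ?case using Cons by auto
qed

context su begin

lemma matching_exists: "\<exists>M. finite M \<and> card M = card B - card A \<and>
   (\<forall>p\<in>M. snd p \<in> B \<and> fst p \<in> B \<union> T \<and> E (fst p) (snd p)) \<and>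
   (\<forall>p\<in>M. \<forall>q\<in>M. p \<noteq> q \<longrightarrow> {fst p, snd p} \<inter> {fst q, snd q} = {})"
proof (cases "card A < card B")
  case False
  then have "card B - card A = 0" by simp
  then show ?thesis by (intro exI[of _ "{}"]) auto
next
  case True
  have cB: "\<forall>x\<in>B. real (dout E B x) < real n / 20 \<and> real (din E B x) < real n / 20"
    and cT: "\<forall>x\<in>T. real (dout E B x) < real n / 20"
    using ab True unfolding AB_conditions_def by auto
  define k where "k = card B - card A"
  define Eh where "Eh = {p. snd p \<in> B \<and> fst p \<in> B \<union> T \<and> E (fst p) (snd p)}"
  define D where "D = real n / 10 + real (card T)"
  have finEh: "finite Eh"
    by (rule finite_subset[of _ "V \<times> V"]) (use finV Evert in \<open>auto simp: Eh_def\<close>)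
  have noloop: "\<forall>e\<in>Eh. fst e \<noteq> snd e" using Eirr unfolding Eh_def by auto
  have Dpos: "0 < D" using n_pos unfolding D_def by simp
  have deg: "\<forall>v. real (card {e\<in>Eh. fst e = v \<or> snd e = v}) \<le> D"
  proof
    fix v
    have sub: "{e\<in>Eh. fst e = v \<or> snd e = v} \<subseteq> (\<lambda>x. (v,x)) ` {x\<in>B. E v x \<and> v \<in> B \<union> T} \<union> (\<lambda>y. (y,v)) ` ({y\<in>B. E y v \<and> v \<in> B} \<union> T)"
    proof (rule subsetI)
      fix e assume "e \<in> {e\<in>Eh. fst e = v \<or> snd e = v}"
      then obtain y x where ex: "e = (y,x)" "x \<in> B" "y \<in> B \<union> T" "E y x" "y = v \<or> x = v"
        by (cases e) (auto simp: Eh_def)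
      show "e \<in> (\<lambda>x. (v,x)) ` {x\<in>B. E v x \<and> v \<in> B \<union> T} \<union> (\<lambda>y. (y,v)) ` ({y\<in>B. E y v \<and> v \<in> B} \<union> T)"
      proof (cases "y = v")
        case True
        then have "x \<in> {x\<in>B. E v x \<and> v \<in> B \<union> T}" using ex by auto
        then show ?thesis using ex True by (intro UnI1 image_eqI[of _ _ x]) auto
      next
        case False
        then have "x = v" using ex by auto
        then have "y \<in> {y\<in>B. E y v \<and> v \<in> B} \<union> T" using ex by blast
        then show ?thesis using ex \<open>x = v\<close> by (intro UnI2) (rule image_eqI[of _ _ y]; simp)
      qed
    qed
    have "card {e\<in>Eh. fst e = v \<or> snd e = v} \<le> card ((\<lambda>x. (v,x)) ` {x\<in>B. E v x \<and> v \<in> B \<union> T} \<union> (\<lambda>y. (y,v)) ` ({y\<in>B. E y v \<and> v \<in> B} \<union> T))"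
      by (rule card_mono[OF _ sub]) (use fin in auto)
    also have "\<dots> \<le> card ((\<lambda>x. (v,x)) ` {x\<in>B. E v x \<and> v \<in> B \<union> T}) + card ((\<lambda>y. (y,v)) ` ({y\<in>B. E y v \<and> v \<in> B} \<union> T))"
      by (rule card_Un_le)
    also have "\<dots> \<le> card {x\<in>B. E v x \<and> v \<in> B \<union> T} + card ({y\<in>B. E y v \<and> v \<in> B} \<union> T)"
      by (intro add_mono card_image_le) (use fin in auto)
    also have "\<dots> \<le> card {x\<in>B. E v x \<and> v \<in> B \<union> T} + (card {y\<in>B. E y v \<and> v \<in> B} + card T)"
      by (intro add_mono card_Un_le) simp
    finally have c: "card {e\<in>Eh. fst e = v \<or> snd e = v} \<le> card {x\<in>B. E v x \<and> v \<in> B \<union> T} + (card {y\<in>B. E y v \<and> v \<in> B} + card T)" .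
    have c1: "real (card {x\<in>B. E v x \<and> v \<in> B \<union> T}) \<le> real n / 20"
    proof (cases "v \<in> B \<union> T")
      case True
      then have "{x\<in>B. E v x \<and> v \<in> B \<union> T} = {x\<in>B. E v x}" by auto
      moreover have "real (dout E B v) < real n / 20" using True cB cT by blast
      ultimately show ?thesis unfolding dout_def by simp
    next
      case False then show ?thesis by simp
    qed
    have c2: "real (card {y\<in>B. E y v \<and> v \<in> B}) \<le> real n / 20"
    proof (cases "v \<in> B")
      case True
      then have "{y\<in>B. E y v \<and> v \<in> B} = {y\<in>B. E y v}" by auto
      moreover have "real (din E B v) < real n / 20" using True cB by blast
      ultimately show ?thesis unfolding din_def by simp
    next
      case False then show ?thesis by simp
    qed
    have "real (card {e\<in>Eh. fst e = v \<or> snd e = v}) \<le> real (card {x\<in>B. E v x \<and> v \<in> B \<union> T}) + (real (card {y\<in>B. E y v \<and> v \<in> B}) + real (card T))"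
      using c by (simp only: of_nat_add[symmetric] of_nat_le_iff)
    then show "real (card {e\<in>Eh. fst e = v \<or> snd e = v}) \<le> D" using c1 c2 unfolding D_def by linarith
  qed
  have Eh_UN: "Eh = (\<Union>x\<in>B. (\<lambda>y. (y,x)) ` {y\<in>B \<union> T. E y x})" unfolding Eh_def by auto
  have "card Eh = (\<Sum>x\<in>B. card ((\<lambda>y. (y,x)) ` {y\<in>B \<union> T. E y x}))"
    unfolding Eh_UN by (rule card_UN_disjoint) (use fin in auto)
  also have "\<dots> = (\<Sum>x\<in>B. card {y\<in>B \<union> T. E y x})"
    by (intro sum.cong refl card_image) (auto simp: inj_on_def)
  finally have cEh: "real (card Eh) = (\<Sum>x\<in>B. real (card {y\<in>B \<union> T. E y x}))" by simp
  have each: "real n / 2 - real (card A) - real (card S) \<le> real (card {y\<in>B \<union> T. E y x})" if x: "x \<in> B" for x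
  proof -
    have xV: "x \<in> V" using x subV by auto
    have "real n / 2 \<le> real (din E V x)" using msd xV unfolding min_semideg_ge_def by auto
    moreover have "{y\<in>V. E y x} \<subseteq> A \<union> S \<union> {y\<in>B \<union> T. E y x}" using part(1) by auto
    then have "card {y\<in>V. E y x} \<le> card (A \<union> S \<union> {y\<in>B \<union> T. E y x})" by (rule card_mono[rotated]) (use fin in auto)
    moreover have "card (A \<union> S \<union> {y\<in>B \<union> T. E y x}) \<le> card A + card S + card {y\<in>B \<union> T. E y x}"
      by (meson add_le_mono card_Un_le le_refl order_trans)
    ultimately show ?thesis unfolding din_def by linarith
  qed
  have "real (card B) * (real n / 2 - real (card A) - real (card S)) \<le> (\<Sum>x\<in>B. real (card {y\<in>B \<union> T. E y x}))"
    using sum_bounded_below[of B "real n / 2 - real (card A) - real (card S)" "\<lambda>x. real (card {y\<in>B \<union> T. E y x})"] each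
    by auto
  moreover have "real k / 2 \<le> real n / 2 - real (card A) - real (card S)"
  proof -
    have rn: "real n = real (card A) + real (card B) + real (card S) + real (card T)" using n_eq by simp
    have rk: "real k = real (card B) - real (card A)" using True unfolding k_def by (simp add: of_nat_diff)
    have "real (card S) \<le> real (card T)" using cardAB by simp
    then show ?thesis using rn rk by linarith
  qed
  ultimately have "real (card B) * (real k / 2) \<le> real (card Eh)"
    using cEh mult_left_mono[of "real k / 2" "real n / 2 - real (card A) - real (card S)" "real (card B)"] by simp
  moreover have "2 * D \<le> real (card B) / 2"
  proof -
    have "e3 * n \<le> e4 * n / 100" "e4 * n \<le> n / 2000" using e3le e4le mult_right_mono[OF e3le, of "real n"] mult_right_mono[OF e4le, of "real n"] by simp_all
    moreover have "real (card T) \<le> e3 * n" using sizes(5) by simp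
    ultimately show ?thesis using sizes(4) n_pos unfolding D_def by argo
  qed
  ultimately have "2 * D * real k \<le> real (card Eh)"
  proof -
    assume a: "real (card B) * (real k / 2) \<le> real (card Eh)" "2 * D \<le> real (card B) / 2"
    have "2 * D * real k \<le> real (card B) / 2 * real k" using mult_right_mono[OF a(2), of "real k"] by simp
    also have "\<dots> = real (card B) * (real k / 2)" by simp
    finally show ?thesis using a(1) by linarith
  qed
  from greedy_matching[OF finEh noloop deg Dpos this] obtain M where
    M: "M \<subseteq> Eh" "card M = k" "\<forall>p\<in>M. \<forall>q\<in>M. p \<noteq> q \<longrightarrow> {fst p, snd p} \<inter> {fst q, snd q} = {}" by auto
  show ?thesis
    by (intro exI[of _ M] conjI) (use M finEh finite_subset in \<open>auto simp: Eh_def k_def\<close>)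
qed

end


lemma concat_single: "concat (map (\<lambda>x. [f x]) xs) = map f xs" by (induction xs) auto
lemma sum_list_const: "sum_list (map (\<lambda>x. (c::nat)) xs) = length xs * c" by (induction xs) auto

context su begin

definition "uS s = U [s] {y\<in>A. E y s} True {y\<in>B. E s y} False 0"
definition "uT t = U [t] {y\<in>B. E y t} False {y\<in>A. E t y} True 0"
definition "uP p = U [fst p, snd p] (if fst p \<in> T then {z\<in>B. E z (fst p)} else {z\<in>A. E z (fst p)}) (fst p \<notin> T) {z\<in>A. E (snd p) z} True 1"

lemma STdeg: "\<forall>x\<in>S. real (din E A x) \<ge> real n / 50 \<and> real (dout E B x) \<ge> real n / 50"
  "\<forall>x\<in>T. real (din E B x) \<ge> real n / 50 \<and> real (dout E A x) \<ge> real n / 50"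
  using ab unfolding AB_conditions_def by auto

lemma valid_uS: "s \<in> S \<Longrightarrow> valid_unit (uS s)"
  using STdeg(1) subV part by (auto simp: valid_unit_def uS_def cls_def din_def dout_def)

lemma valid_uT: "t \<in> T \<Longrightarrow> valid_unit (uT t)"
  using STdeg(2) subV part by (auto simp: valid_unit_def uT_def cls_def din_def dout_def)

lemma valid_uP: assumes p: "snd p \<in> B" "fst p \<in> B \<union> T" "E (fst p) (snd p)"
  shows "valid_unit (uP p)"
proof -
  have ne: "fst p \<noteq> snd p" using p(3) Eirr by auto
  have bx: "real n / 50 \<le> real (card {z\<in>A. E (snd p) z})" using bip p(1)
    unfolding bip_semideg_ge_def dout_def by auto
  show ?thesis
  proof (cases "fst p \<in> T")
    case True
    have "real n / 50 \<le> real (card {z\<in>B. E z (fst p)})" using STdeg(2) True unfolding din_def by auto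
    moreover have "B \<inter> set [fst p, snd p] = {snd p}" using True p(1) part(6) by auto
    ultimately show ?thesis using True p ne bx subV part
      by (auto simp: valid_unit_def uP_def cls_def)
  next
    case False
    then have y: "fst p \<in> B" using p(2) by auto
    have "real n / 50 \<le> real (card {z\<in>A. E z (fst p)})" using bip y unfolding bip_semideg_ge_def din_def by auto
    moreover have "B \<inter> set [fst p, snd p] = {fst p, snd p}" using y p(1) by auto
    ultimately show ?thesis using False p ne bx subV part y
      by (auto simp: valid_unit_def uP_def cls_def)
  qed
qed

lemma units_exist: "\<exists>us. (\<forall>u\<in>set us. valid_unit u) \<and> distinct (concat (map uvs us)) \<and>
   S \<union> T \<subseteq> set (concat (map uvs us)) \<and> (\<Sum>u\<leftarrow>us. ush u) = card B - card A \<and>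
   length us \<le> card S + card T + (card B - card A)"
proof -
  obtain M where M: "finite M" "card M = card B - card A"
    "\<forall>p\<in>M. snd p \<in> B \<and> fst p \<in> B \<union> T \<and> E (fst p) (snd p)"
    "\<forall>p\<in>M. \<forall>q\<in>M. p \<noteq> q \<longrightarrow> {fst p, snd p} \<inter> {fst q, snd q} = {}"
    using matching_exists by blast
  define Sl where "Sl = sorted_list_of_set S"
  define Tl where "Tl = sorted_list_of_set (T - fst ` M)"
  obtain Ml where Ml: "set Ml = M" "distinct Ml" using finite_distinct_list[OF M(1)] by blast
  have Ls: "set Sl = S" "distinct Sl" "set Tl = T - fst ` M" "distinct Tl" "set Ml = M" "distinct Ml"
    "length Sl = card S" "length Tl = card (T - fst ` M)" "length Ml = card M"
    using fin M(1) Ml distinct_card[OF Ml(2)] unfolding Sl_def Tl_def by auto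
  define us where "us = map uS Sl @ map uT Tl @ map uP Ml"
  have cc: "concat (map uvs us) = Sl @ Tl @ concat (map (\<lambda>p. [fst p, snd p]) Ml)"
    unfolding us_def by (simp add: uS_def uT_def uP_def comp_def concat_single)
  have pairset: "set (concat (map (\<lambda>p. [fst p, snd p]) Ml)) = fst ` M \<union> snd ` M"
    using Ls(5) by auto
  have pd: "distinct (concat (map (\<lambda>p. [fst p, snd p]) Ml))"
    using Ls(5,6) M(3,4) Eirr by (intro distinct_pairs) auto
  have sub1: "fst ` M \<subseteq> B \<union> T" "snd ` M \<subseteq> B" using M(3) by auto
  have "distinct (concat (map uvs us))"
    unfolding cc using Ls pd pairset sub1 part by auto
  moreover have "\<forall>u\<in>set us. valid_unit u"
    unfolding us_def using Ls valid_uS valid_uT valid_uP M(3) by auto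
  moreover have "S \<union> T \<subseteq> set (concat (map uvs us))"
    unfolding cc using Ls pairset by auto
  moreover have "(\<Sum>u\<leftarrow>us. ush u) = card B - card A"
    unfolding us_def using Ls M(2) by (simp add: uS_def uT_def uP_def comp_def sum_list_const)
  moreover have "length us \<le> card S + card T + (card B - card A)"
  proof -
    have "card (T - fst ` M) \<le> card T" using fin by (simp add: card_mono)
    then show ?thesis unfolding us_def using Ls M(2) by simp
  qed
  ultimately show ?thesis by blast
qed

lemma su_main: "\<exists>P. exceptional_cover n ori V E A B S T P \<and> real (length P - 1) \<le> 21 * e4 * n"
proof -
  obtain us where us: "\<forall>u\<in>set us. valid_unit u" "distinct (concat (map uvs us))"
   "S \<union> T \<subseteq> set (concat (map uvs us))" "(\<Sum>u\<leftarrow>us. ush u) = card B - card A"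
   "length us \<le> card S + card T + (card B - card A)" using units_exist by blast
  interpret bu n V E A B S T ori e3 e4 us
    by unfold_locales (use us in auto)
  show ?thesis by (rule bu_main)
qed

end

theorem proposition6p3:
  shows "\<exists>e4max > (0::real). \<forall>eps4::real. 0 < eps4 \<and> eps4 \<le> e4max \<longrightarrow>
           (\<exists>e3max > 0. \<forall>eps3. 0 < eps3 \<and> eps3 \<le> e3max \<longrightarrow>
             (\<exists>N. \<forall>n \<ge> N. \<forall>V E A B S T (ori :: nat \<Rightarrow> bool).
                digraph V E \<and> card V = n \<and> min_semideg_ge V E (real n / 2) \<and>
                AB_conditions eps3 n V E A B S T \<and>
                real (sigma_cyc n ori) < eps4 * n \<longrightarrow>
                (\<exists>P. exceptional_cover n ori V E A B S T P \<and>
                     real (length P - 1) \<le> 21 * eps4 * n)))"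
proof (rule exI[of _ "1/2000::real"], intro conjI allI impI)
  show "(0::real) < 1/2000" by simp
  fix eps4 :: real assume e4: "0 < eps4 \<and> eps4 \<le> 1/2000"
  show "\<exists>e3max > 0. \<forall>eps3. 0 < eps3 \<and> eps3 \<le> e3max \<longrightarrow>
             (\<exists>N. \<forall>n \<ge> N. \<forall>V E A B S T (ori :: nat \<Rightarrow> bool).
                digraph V E \<and> card V = n \<and> min_semideg_ge V E (real n / 2) \<and>
                AB_conditions eps3 n V E A B S T \<and>
                real (sigma_cyc n ori) < eps4 * n \<longrightarrow>
                (\<exists>P. exceptional_cover n ori V E A B S T P \<and>
                     real (length P - 1) \<le> 21 * eps4 * n))"
  proof (rule exI[of _ "eps4/100"], intro conjI allI impI)
    show "0 < eps4 / 100" using e4 by simp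
    fix eps3 :: real assume e3: "0 < eps3 \<and> eps3 \<le> eps4 / 100"
    show "\<exists>N. \<forall>n \<ge> N. \<forall>V E A B S T (ori :: nat \<Rightarrow> bool).
                digraph V E \<and> card V = n \<and> min_semideg_ge V E (real n / 2) \<and>
                AB_conditions eps3 n V E A B S T \<and>
                real (sigma_cyc n ori) < eps4 * n \<longrightarrow>
                (\<exists>P. exceptional_cover n ori V E A B S T P \<and>
                     real (length P - 1) \<le> 21 * eps4 * n)"
    proof (rule exI[of _ "nat \<lceil>100 / eps4\<rceil>"], intro allI impI)
      fix n :: nat and V E A B S T and ori :: "nat \<Rightarrow> bool"
      assume n: "nat \<lceil>100 / eps4\<rceil> \<le> n"
      assume h: "digraph V E \<and> card V = n \<and> min_semideg_ge V E (real n / 2) \<and>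
                AB_conditions eps3 n V E A B S T \<and> real (sigma_cyc n ori) < eps4 * n"
      have "real (nat \<lceil>100 / eps4\<rceil>) \<le> real n" using n by (simp only: of_nat_le_iff)
      then have "100 / eps4 \<le> real n"
        using real_nat_ceiling_ge[of "100/eps4"] by linarith
      then have "eps4 * (100 / eps4) \<le> eps4 * real n" using e4 by (intro mult_left_mono) auto
      then have nb: "100 \<le> eps4 * real n" using e4 by simp
      interpret su n V E A B S T ori eps3 eps4
        by unfold_locales (use h e3 e4 nb in auto)
      show "\<exists>P. exceptional_cover n ori V E A B S T P \<and> real (length P - 1) \<le> 21 * eps4 * n"
        by (rule su_main)
    qed
  qed
qed


end
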